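(* For any $q\in[0,1)^{\mathscr S}$, \[ \lim_{n\to\infty,\ \rho\to0}\ \limsup_{N\to\infty}\big|\mathbb E F_N^q(n,\rho)-\mathbb E\tilde F_N^q(n,\rho)\big|=0. \]
   Context: Fix a finite set $\mathscr S$ of species. For each $N\ge1$, $\{1,\dots,N\}=\bigcup_{s\in\mathscr S}I_s$ with disjoint $I_s$, $N_s=|I_s|$, $N_s/N\to\lambda_s\in(0,1)$. $S(d)=\{x\in\mathbb R^d:\|x\|=\sqrt d\}$, $S_N=\{\sigma\in\mathbb R^N:(\sigma_i)_{i\in I_s}\in S(N_s)\ \forall s\}$, $\mu$ = product of uniform probability measures on the $S(N_s)$. $R_s(\sigma,\sigma')=N_s^{-1}\sum_{i\in I_s}\sigma_i\sigma'_i$. $P=\{p\in\mathbb Z_{\ge0}^{\mathscr S}:|p|\ge1\}$, $|p|=\sum_sp(s)$. A mixture is $\xi(x)=\sum_{p\in P}\Delta_p^2\prod_sx(s)^{p(s)}$, $\Delta_p\ge0$, $\xi(1+\epsilon)<\infty$ for some $\epsilon>0$; its Hamiltonian is $H_N(\sigma)=\sqrt N\sum_{k\ge1}\sum_{i_1,\dots,i_k=1}^N\Delta_{i_1,\dots,i_k}J_{i_1,\dots,i_k}\sigma_{i_1}\cdots\sigma_{i_k}$, $J$ i.i.d. standard Gaussian, $\Delta_{i_1,\dots,i_k}^2=\Delta_p^2\frac{\prod_sp(s)!}{k!}\prod_sN_s^{-p(s)}$ when $\#\{j:i_j\in I_s\}=p(s)$ for all $s$. Fix a mixture $\xi$. For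 $q\in[0,1)^{\mathscr S}$: $\Delta_{q,p}^2=\sum_{p'\ge p}\Delta_{p'}^2\prod_s\binom{p'(s)}{p(s)}(1-q(s))^{p(s)}q(s)^{p'(s)-p(s)}$, $\tilde\xi_q(x)=\sum_{p\in P}\Delta_{q,p}^2\prod_sx(s)^{p(s)}$ $(=\xi((1-q)x+q)-\xi(q))$, $\xi_q(x)=\sum_{|p|\ge2}\Delta_{q,p}^2\prod_sx(s)^{p(s)}$; $\tilde H_N^q$, $H_N^q$ are their Hamiltonians. With $B(0,n,\rho)=\{(\sigma^i)_{i\le n}\in S_N^n:\forall i\ne j,s,|R_s(\sigma^i,\sigma^j)|\le\rho\}$, define $F_N^q(n,\rho)=\frac1{Nn}\log\int_{B(0,n,\rho)}e^{\sum_{i\le n}H_N^q(\sigma^i)}d\mu^{\otimes n}$ and $\tilde F_N^q(n,\rho)$ likewise with $\tilde H_N^q$. *)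

theory Defs
  imports "HOL-Probability.Probability"
begin

text \<open>Indices of \<open>{1..N}\<close> are relabelled as \<open>{..<N}\<close>.
  A configuration is a function \<open>nat \<Rightarrow> real\<close> (only the values on \<open>{..<N}\<close> matter).
  The species partition is a family \<open>I :: nat \<Rightarrow> 's \<Rightarrow> nat set\<close>, \<open>I N s\<close> = block of species s.\<close>

definition norm_p :: "('s::finite \<Rightarrow> nat) \<Rightarrow> nat" where
  "norm_p p = (\<Sum>s\<in>UNIV. p s)"

text \<open>Uniform probability measure on the sphere of radius \<open>sqrt |A|\<close> in \<open>\<real>^A\<close>
  (normalized surface measure = cone measure: push-forward of the uniform
   measure on the unit ball under radial projection).\<close>
definition unit_ball_fin :: "nat set \<Rightarrow> (nat \<Rightarrow> real) set" where
  "unit_ball_fin A = {x \<in> PiE A (\<lambda>_. UNIV). (\<Sum>i\<in>A. (x i)\<^sup>2) \<le> 1}"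

definition sphere_unif :: "nat set \<Rightarrow> (nat \<Rightarrow> real) measure" where
  "sphere_unif A = distr (uniform_measure (PiM A (\<lambda>_. lborel)) (unit_ball_fin A))
      (PiM A (\<lambda>_. lborel))
      (\<lambda>x. restrict (\<lambda>i. sqrt (real (card A)) * x i / sqrt (\<Sum>j\<in>A. (x j)\<^sup>2)) A)"

definition mu_N :: "(nat \<Rightarrow> 's::finite \<Rightarrow> nat set) \<Rightarrow> nat \<Rightarrow> (nat \<Rightarrow> real) measure" where
  "mu_N I N = distr (PiM (UNIV :: 's set) (\<lambda>s. sphere_unif (I N s)))
      (PiM {..<N} (\<lambda>_. lborel))
      (\<lambda>\<omega>. restrict (\<lambda>i. \<omega> (THE s. i \<in> I N s) i) {..<N})"

definition S_N :: "(nat \<Rightarrow> 's::finite \<Rightarrow> nat set) \<Rightarrow> nat \<Rightarrow> (nat \<Rightarrow> real) set" where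
  "S_N I N = {\<sigma>. \<forall>s. (\<Sum>i\<in>I N s. (\<sigma> i)\<^sup>2) = real (card (I N s))}"

definition overlap :: "(nat \<Rightarrow> 's \<Rightarrow> nat set) \<Rightarrow> nat \<Rightarrow> 's \<Rightarrow> (nat \<Rightarrow> real) \<Rightarrow> (nat \<Rightarrow> real) \<Rightarrow> real" where
  "overlap I N s \<sigma> \<sigma>' = (\<Sum>i\<in>I N s. \<sigma> i * \<sigma>' i) / real (card (I N s))"

text \<open>Disorder: i.i.d. standard Gaussians \<open>J_{i_1..i_k}\<close> indexed by all finite tuples (lists).\<close>
definition disorder :: "(nat list \<Rightarrow> real) measure" where
  "disorder = PiM UNIV (\<lambda>_::nat list. density lborel std_normal_density)"

text \<open>Number of entries of a tuple belonging to species s, i.e. the p associated with it.\<close>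
definition tuple_p :: "(nat \<Rightarrow> 's \<Rightarrow> nat set) \<Rightarrow> nat \<Rightarrow> nat list \<Rightarrow> 's \<Rightarrow> nat" where
  "tuple_p I N is s = length (filter (\<lambda>j. j \<in> I N s) is)"

text \<open>\<open>\<Delta>_{i_1..i_k}\<close> for a mixture with coefficients \<open>D p = \<Delta>_p \<ge> 0\<close>.\<close>
definition coef :: "(nat \<Rightarrow> 's::finite \<Rightarrow> nat set) \<Rightarrow> (('s \<Rightarrow> nat) \<Rightarrow> real) \<Rightarrow> nat \<Rightarrow> nat list \<Rightarrow> real" where
  "coef I D N is = (let p = tuple_p I N is in
     sqrt ((D p)\<^sup>2 * (\<Prod>s\<in>UNIV. fact (p s)) / fact (length is)
           * (\<Prod>s\<in>UNIV. real (card (I N s)) powr (- real (p s)))))"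

definition tuples :: "nat \<Rightarrow> nat \<Rightarrow> nat list set" where
  "tuples N k = {is. length is = k \<and> set is \<subseteq> {..<N}}"

definition hamiltonian :: "(nat \<Rightarrow> 's::finite \<Rightarrow> nat set) \<Rightarrow> (('s \<Rightarrow> nat) \<Rightarrow> real) \<Rightarrow> nat
    \<Rightarrow> (nat list \<Rightarrow> real) \<Rightarrow> (nat \<Rightarrow> real) \<Rightarrow> real" where
  "hamiltonian I D N J \<sigma> = sqrt (real N) *
     (\<Sum>k. \<Sum>is\<in>tuples N (Suc k). coef I D N is * J is * (\<Prod>j\<leftarrow>is. \<sigma> j))"

definition Delta_q :: "(('s::finite \<Rightarrow> nat) \<Rightarrow> real) \<Rightarrow> ('s \<Rightarrow> real) \<Rightarrow> ('s \<Rightarrow> nat) \<Rightarrow> real" where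
  "Delta_q D q p = sqrt (infsum (\<lambda>p'. (D p')\<^sup>2 *
       (\<Prod>s\<in>UNIV. real (p' s choose p s) * (1 - q s) ^ p s * q s ^ (p' s - p s)))
     {p'. \<forall>s. p s \<le> p' s})"

text \<open>Coefficients of \<open>\<xi>_q\<close> (only \<open>|p| \<ge> 2\<close>) and of \<open>\<tilde>\<xi>_q\<close> (all \<open>|p| \<ge> 1\<close>).\<close>
definition Delta_q2 :: "(('s::finite \<Rightarrow> nat) \<Rightarrow> real) \<Rightarrow> ('s \<Rightarrow> real) \<Rightarrow> ('s \<Rightarrow> nat) \<Rightarrow> real" where
  "Delta_q2 D q p = (if norm_p p \<ge> 2 then Delta_q D q p else 0)"

definition Delta_q1 :: "(('s::finite \<Rightarrow> nat) \<Rightarrow> real) \<Rightarrow> ('s \<Rightarrow> real) \<Rightarrow> ('s \<Rightarrow> nat) \<Rightarrow> real" where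
  "Delta_q1 D q p = (if norm_p p \<ge> 1 then Delta_q D q p else 0)"

definition Bset :: "(nat \<Rightarrow> 's::finite \<Rightarrow> nat set) \<Rightarrow> nat \<Rightarrow> nat \<Rightarrow> real \<Rightarrow> (nat \<Rightarrow> nat \<Rightarrow> real) set" where
  "Bset I N n \<rho> = {\<Sigma> \<in> PiE {..<n} (\<lambda>_. S_N I N).
      \<forall>i<n. \<forall>j<n. i \<noteq> j \<longrightarrow> (\<forall>s. \<bar>overlap I N s (\<Sigma> i) (\<Sigma> j)\<bar> \<le> \<rho>)}"

definition free_energy :: "(nat \<Rightarrow> 's::finite \<Rightarrow> nat set) \<Rightarrow> (('s \<Rightarrow> nat) \<Rightarrow> real) \<Rightarrow> nat
    \<Rightarrow> nat \<Rightarrow> real \<Rightarrow> (nat list \<Rightarrow> real) \<Rightarrow> real" where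
  "free_energy I D N n \<rho> J = 1 / (real N * real n) *
     ln (set_lebesgue_integral (PiM {..<n} (\<lambda>_. mu_N I N)) (Bset I N n \<rho>)
           (\<lambda>\<Sigma>. exp (\<Sum>i<n. hamiltonian I D N J (\<Sigma> i))))"

definition exp_free_energy :: "(nat \<Rightarrow> 's::finite \<Rightarrow> nat set) \<Rightarrow> (('s \<Rightarrow> nat) \<Rightarrow> real) \<Rightarrow> nat
    \<Rightarrow> nat \<Rightarrow> real \<Rightarrow> real" where
  "exp_free_energy I D N n \<rho> = integral\<^sup>L disorder (free_energy I D N n \<rho>)"

end

theory Submission
  imports Defs
begin


lemma sets_sphere_unif[measurable_cong]: "sets (sphere_unif A) = sets (PiM A (\<lambda>_. lborel))"
  unfolding sphere_unif_def by simp

lemma space_sphere_unif: "space (sphere_unif A) = space (PiM A (\<lambda>_. lborel))"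
  unfolding sphere_unif_def by simp

lemma unit_ball_fin_sets: "unit_ball_fin A \<in> sets (PiM A (\<lambda>_. lborel))" if "finite A"
proof -
  have "unit_ball_fin A = {x \<in> space (PiM A (\<lambda>_. lborel)). (\<Sum>i\<in>A. (x i)\<^sup>2) \<le> 1}"
    by (auto simp: unit_ball_fin_def space_PiM)
  also have "\<dots> \<in> sets (PiM A (\<lambda>_. lborel))"
    by measurable
  finally show ?thesis .
qed

lemma finite_measure_uniform_measure_le:
  assumes "B \<in> sets M" shows "finite_measure (uniform_measure M B)"
proof
  have "emeasure (uniform_measure M B) (space (uniform_measure M B)) = emeasure M B / emeasure M B"
    using assms by (simp add: Int_absorb2 sets.sets_into_space)
  also have "\<dots> \<le> 1"
  proof (cases "emeasure M B = 0 \<or> emeasure M B = \<infinity>")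
    case True then show ?thesis by (auto simp: divide_ennreal_def)
  next
    case False then show ?thesis by (simp add: ennreal_divide_self top.not_eq_extremum)
  qed
  finally show "emeasure (uniform_measure M B) (space (uniform_measure M B)) \<noteq> \<infinity>"
    by (metis ennreal_one_less_top infinity_ennreal_def leD)
qed

lemma finite_measure_sphere_unif: "finite A \<Longrightarrow> finite_measure (sphere_unif A)"
  unfolding sphere_unif_def
  apply (rule finite_measure.finite_measure_distr)
   apply (rule finite_measure_uniform_measure_le)
   apply (erule unit_ball_fin_sets)
  apply (subst measurable_cong_sets[OF sets_uniform_measure refl])
  apply measurable
  done

lemma meas_J[measurable]: "(\<lambda>J. J is) \<in> borel_measurable disorder"
proof -
  have "(\<lambda>J. J is) \<in> disorder \<rightarrow>\<^sub>M density lborel std_normal_density"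
    unfolding disorder_def by (rule measurable_component_singleton) simp
  then show ?thesis by (simp add: measurable_cong_sets[OF refl sets_density])
qed

lemma meas_comp_L: "j < N \<Longrightarrow> (\<lambda>\<sigma>::nat\<Rightarrow>real. \<sigma> j) \<in> borel_measurable (PiM {..<N} (\<lambda>_. lborel))"
  using measurable_component_singleton[of j "{..<N}" "\<lambda>_. lborel"]
  by (simp add: measurable_cong_sets[OF refl sets_lborel])

lemma meas_prod_list: "set is \<subseteq> {..<N} \<Longrightarrow>
   (\<lambda>\<sigma>::nat\<Rightarrow>real. \<Prod>j\<leftarrow>is. \<sigma> j) \<in> borel_measurable (PiM {..<N} (\<lambda>_. lborel))"
proof (induction "is")
  case Nil then show ?case by simp
next
  case (Cons a "is")
  then have "a < N" by auto
  have "(\<lambda>\<sigma>::nat\<Rightarrow>real. \<sigma> a * (\<Prod>j\<leftarrow>is. \<sigma> j)) \<in> borel_measurable (PiM {..<N} (\<lambda>_. lborel))"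
    by (rule borel_measurable_times) (use Cons \<open>a < N\<close> meas_comp_L in auto)
  then show ?case by simp
qed

lemma meas_ham: "(\<lambda>x. hamiltonian I D N (fst x) (snd x))
    \<in> borel_measurable (disorder \<Otimes>\<^sub>M PiM {..<N} (\<lambda>_. lborel))"
  unfolding hamiltonian_def
proof (rule borel_measurable_times[OF borel_measurable_const], rule borel_measurable_suminf, rule borel_measurable_sum)
  fix k "is" assume "is \<in> tuples N (Suc k)"
  then have "set is \<subseteq> {..<N}" by (simp add: tuples_def)
  then have m: "(\<lambda>x. (\<Prod>j\<leftarrow>is. snd x j)::real) \<in> borel_measurable (disorder \<Otimes>\<^sub>M PiM {..<N} (\<lambda>_. lborel))"
    using measurable_compose[OF measurable_snd meas_prod_list[of "is" N], of disorder] by simp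
  have "(\<lambda>x. fst x is) \<in> borel_measurable (disorder \<Otimes>\<^sub>M PiM {..<N} (\<lambda>_. lborel))"
    using measurable_compose[OF measurable_fst meas_J] by simp
  with m show "(\<lambda>x. coef I D N is * fst x is * (\<Prod>j\<leftarrow>is. snd x j)) \<in> borel_measurable (disorder \<Otimes>\<^sub>M PiM {..<N} (\<lambda>_. lborel))"
    by (intro borel_measurable_times borel_measurable_const)
qed

locale part =
  fixes I :: "nat \<Rightarrow> 's::finite \<Rightarrow> nat set"
  assumes disj: "\<And>N s s'. s \<noteq> s' \<Longrightarrow> I N s \<inter> I N s' = {}"
    and cover: "\<And>N. (\<Union>s. I N s) = {..<N}"
begin

lemma I_sub: "I N s \<subseteq> {..<N}"
  using cover[of N] by blast

lemma finite_I[simp]: "finite (I N s)"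
  using I_sub finite_subset by blast

lemma I_unique: "i \<in> I N s \<Longrightarrow> i \<in> I N s' \<Longrightarrow> s = s'"
  using disj by blast

lemma the_I: "i < N \<Longrightarrow> i \<in> I N (THE s. i \<in> I N s)"
proof -
  assume "i < N"
  then obtain s where s: "i \<in> I N s" using cover[of N] by blast
  then have "(THE s. i \<in> I N s) = s" using I_unique by blast
  then show ?thesis using s by simp
qed

lemma mu_map_meas: "(\<lambda>\<omega>. restrict (\<lambda>i. \<omega> (THE s. i \<in> I N s) i) {..<N})
   \<in> PiM UNIV (\<lambda>s. sphere_unif (I N s)) \<rightarrow>\<^sub>M PiM {..<N} (\<lambda>_. lborel)"
proof (rule measurable_restrict)
  fix i assume "i \<in> {..<N}"
  then have i: "i \<in> I N (THE s. i \<in> I N s)" using the_I by simp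
  define t where "t = (THE s. i \<in> I N s)"
  have "(\<lambda>\<omega>. \<omega> t) \<in> PiM UNIV (\<lambda>s. sphere_unif (I N s)) \<rightarrow>\<^sub>M sphere_unif (I N t)"
    by (rule measurable_component_singleton) simp
  moreover have "(\<lambda>x. x i) \<in> sphere_unif (I N t) \<rightarrow>\<^sub>M lborel"
    apply (subst measurable_cong_sets[OF sets_sphere_unif refl])
    apply (rule measurable_component_singleton) using i t_def by simp
  ultimately show "(\<lambda>\<omega>. \<omega> (THE s. i \<in> I N s) i) \<in> PiM UNIV (\<lambda>s. sphere_unif (I N s)) \<rightarrow>\<^sub>M lborel"
    unfolding t_def[symmetric] by (rule measurable_compose)
qed

lemma sets_mu_N[measurable_cong]: "sets (mu_N I N) = sets (PiM {..<N} (\<lambda>_. lborel))"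
  unfolding mu_N_def by simp

lemma space_mu_N: "space (mu_N I N) = space (PiM {..<N} (\<lambda>_. lborel))"
  unfolding mu_N_def by simp

lemma finite_measure_mu_N: "finite_measure (mu_N I N)"
proof -
  interpret product_sigma_finite "\<lambda>s. sphere_unif (I N s)"
    by (intro product_sigma_finite.intro finite_measure.axioms(1) finite_measure_sphere_unif finite_I)
  interpret finite_product_sigma_finite "\<lambda>s. sphere_unif (I N s)" "UNIV :: 's set"
    by standard simp
  have "finite_measure (PiM UNIV (\<lambda>s. sphere_unif (I N s)))"
  proof
    have "emeasure (PiM UNIV (\<lambda>s. sphere_unif (I N s))) (PiE UNIV (\<lambda>s. space (sphere_unif (I N s))))
       = (\<Prod>s\<in>UNIV. emeasure (sphere_unif (I N s)) (space (sphere_unif (I N s))))"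
      by (rule measure_times) simp
    also have "\<dots> \<noteq> \<infinity>"
      using finite_measure.emeasure_finite[OF finite_measure_sphere_unif]
      by (simp add: ennreal_prod_eq_top)
    finally show "emeasure (PiM UNIV (\<lambda>s. sphere_unif (I N s))) (space (PiM UNIV (\<lambda>s. sphere_unif (I N s)))) \<noteq> \<infinity>"
      by (simp add: space_PiM)
  qed
  then show ?thesis unfolding mu_N_def
    by (rule finite_measure.finite_measure_distr) (rule mu_map_meas)
qed

lemma sigma_finite_Pi_mu: "sigma_finite_measure (PiM {..<n::nat} (\<lambda>_. mu_N I N))"
proof -
  have ps: "product_sigma_finite (\<lambda>_::nat. mu_N I N)"
    by (intro product_sigma_finite.intro finite_measure.axioms(1) finite_measure_mu_N)
  show ?thesis using product_sigma_finite.sigma_finite[OF ps, of "{..<n}"] by simp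
qed

abbreviation "PL N \<equiv> PiM {..<N} (\<lambda>_::nat. (lborel :: real measure))"

definition QB :: "nat \<Rightarrow> nat \<Rightarrow> real \<Rightarrow> (nat \<Rightarrow> nat \<Rightarrow> real) \<Rightarrow> bool" where
  "QB N n \<rho> \<Sigma> = ((\<forall>i\<in>{..<n}. \<forall>s. (\<Sum>j\<in>I N s. (\<Sigma> i j)\<^sup>2) = real (card (I N s))) \<and>
     (\<forall>i\<in>{..<n}. \<forall>k\<in>{..<n}. i \<noteq> k \<longrightarrow> (\<forall>s. \<bar>(\<Sum>j\<in>I N s. \<Sigma> i j * \<Sigma> k j) / real (card (I N s))\<bar> \<le> \<rho>)))"

lemma m1: "i < n \<Longrightarrow> j < N \<Longrightarrow> (\<lambda>\<Sigma>. \<Sigma> i j) \<in> borel_measurable (PiM {..<n} (\<lambda>_. PL N))"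
  using measurable_compose[OF measurable_component_singleton[of i "{..<n}" "\<lambda>_. PL N"] meas_comp_L[of j N]]
  by simp

lemma msq: "i < n \<Longrightarrow> (\<lambda>\<Sigma>. \<Sum>j\<in>I N s. (\<Sigma> i j)\<^sup>2) \<in> borel_measurable (PiM {..<n} (\<lambda>_. PL N))"
  by (intro borel_measurable_sum borel_measurable_power m1) (use I_sub in auto)

lemma mov: "i < n \<Longrightarrow> k < n \<Longrightarrow> (\<lambda>\<Sigma>. (\<Sum>j\<in>I N s. \<Sigma> i j * \<Sigma> k j) / c) \<in> borel_measurable (PiM {..<n} (\<lambda>_. PL N))"
  by (intro borel_measurable_divide borel_measurable_const borel_measurable_sum borel_measurable_times m1) (use I_sub in auto)

lemma predA: "i < n \<Longrightarrow> Measurable.pred (PiM {..<n} (\<lambda>_. PL N)) (\<lambda>\<Sigma>. \<forall>s. (\<Sum>j\<in>I N s. (\<Sigma> i j)\<^sup>2) = real (card (I N s)))"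
proof -
  assume i: "i < n"
  have [measurable]: "(\<lambda>\<Sigma>. \<Sum>j\<in>I N s. (\<Sigma> i j)\<^sup>2) \<in> borel_measurable (PiM {..<n} (\<lambda>_. PL N))" for s
    by (rule msq[OF i])
  show ?thesis by measurable
qed

lemma predB: "i < n \<Longrightarrow> k < n \<Longrightarrow> Measurable.pred (PiM {..<n} (\<lambda>_. PL N)) (\<lambda>\<Sigma>. i \<noteq> k \<longrightarrow> (\<forall>s. \<bar>(\<Sum>j\<in>I N s. \<Sigma> i j * \<Sigma> k j) / real (card (I N s))\<bar> \<le> \<rho>))"
proof -
  assume i: "i < n" and k: "k < n"
  have [measurable]: "(\<lambda>\<Sigma>. (\<Sum>j\<in>I N s. \<Sigma> i j * \<Sigma> k j) / real (card (I N s))) \<in> borel_measurable (PiM {..<n} (\<lambda>_. PL N))" for s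
    by (rule mov[OF i k])
  show ?thesis by measurable
qed

lemma QB_meas: "Measurable.pred (PiM {..<n} (\<lambda>_. PL N)) (QB N n \<rho>)"
  unfolding QB_def
  apply (rule pred_intros_logic(3))
   apply (rule pred_intros_finite(3), simp, rule predA, simp)
  apply (rule pred_intros_finite(3), simp)
  apply (rule pred_intros_finite(3), simp)
  apply (rule predB; simp)
  done


lemma Bset_space: "\<Sigma> \<in> space (PiM {..<n} (\<lambda>_. PL N)) \<Longrightarrow> (\<Sigma> \<in> Bset I N n \<rho>) = QB N n \<rho> \<Sigma>"
  by (auto simp: Bset_def QB_def space_PiM PiE_iff S_N_def overlap_def)

lemma sets_Pmu: "sets (PiM {..<n} (\<lambda>_. mu_N I N)) = sets (PiM {..<n} (\<lambda>_. PL N))"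
  by (rule sets_PiM_cong[OF refl sets_mu_N])

lemma space_Pmu: "space (PiM {..<n} (\<lambda>_. mu_N I N)) = space (PiM {..<n} (\<lambda>_. PL N))"
  by (rule sets_eq_imp_space_eq[OF sets_Pmu])

lemma meas_sumham: "(\<lambda>x. \<Sum>i<n. hamiltonian I D N (fst x) (snd x i))
   \<in> borel_measurable (disorder \<Otimes>\<^sub>M PiM {..<n} (\<lambda>_. PL N))"
proof (rule borel_measurable_sum)
  fix i assume "i \<in> {..<n}"
  then have "(\<lambda>x. (fst x, snd x i)) \<in> disorder \<Otimes>\<^sub>M PiM {..<n} (\<lambda>_. PL N) \<rightarrow>\<^sub>M disorder \<Otimes>\<^sub>M PL N"
    by (intro measurable_Pair measurable_fst measurable_compose[OF measurable_snd measurable_component_singleton]) auto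
  from measurable_compose[OF this meas_ham[where D=D and N=N and I=I]]
  show "(\<lambda>x. hamiltonian I D N (fst x) (snd x i)) \<in> borel_measurable (disorder \<Otimes>\<^sub>M PiM {..<n} (\<lambda>_. PL N))"
    by simp
qed

lemma meas_integrand': "(\<lambda>x. indicator (Bset I N n \<rho>) (snd x) *\<^sub>R exp (\<Sum>i<n. hamiltonian I D N (fst x) (snd x i)))
   \<in> borel_measurable (disorder \<Otimes>\<^sub>M PiM {..<n} (\<lambda>_. PL N))"
proof -
  have [measurable]: "Measurable.pred (PiM {..<n} (\<lambda>_. PL N)) (QB N n \<rho>)" by (rule QB_meas)
  have [measurable]: "(\<lambda>x. \<Sum>i<n. hamiltonian I D N (fst x) (snd x i))
   \<in> borel_measurable (disorder \<Otimes>\<^sub>M PiM {..<n} (\<lambda>_. PL N))" by (rule meas_sumham)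
  have "(\<lambda>x. (if QB N n \<rho> (snd x) then 1 else 0) *\<^sub>R exp (\<Sum>i<n. hamiltonian I D N (fst x) (snd x i)))
   \<in> borel_measurable (disorder \<Otimes>\<^sub>M PiM {..<n} (\<lambda>_. PL N))"
    by measurable
  then show ?thesis
    by (rule measurable_cong[THEN iffD1, rotated])
       (auto simp: space_pair_measure Bset_space indicator_def)
qed

lemma meas_integrand: "case_prod (\<lambda>J \<Sigma>. indicator (Bset I N n \<rho>) \<Sigma> *\<^sub>R exp (\<Sum>i<n. hamiltonian I D N J (\<Sigma> i)))
   \<in> borel_measurable (disorder \<Otimes>\<^sub>M PiM {..<n} (\<lambda>_. mu_N I N))"
  using meas_integrand'[where n=n and \<rho>=\<rho> and D=D and N=N]
  by (simp add: measurable_cong_sets[OF sets_pair_measure_cong[OF refl sets_Pmu] refl] case_prod_beta')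

lemma meas_free_energy: "free_energy I D N n \<rho> \<in> borel_measurable disorder"
proof -
  interpret sigma_finite_measure "PiM {..<n} (\<lambda>_. mu_N I N)" by (rule sigma_finite_Pi_mu)
  have "(\<lambda>J. \<integral>\<Sigma>. indicator (Bset I N n \<rho>) \<Sigma> *\<^sub>R exp (\<Sum>i<n. hamiltonian I D N J (\<Sigma> i)) \<partial>(PiM {..<n} (\<lambda>_. mu_N I N)))
     \<in> borel_measurable disorder"
    by (rule borel_measurable_lebesgue_integral[OF meas_integrand])
  then show ?thesis
    unfolding free_energy_def[abs_def] set_lebesgue_integral_def
    by (intro borel_measurable_times borel_measurable_const borel_measurable_ln) 
qed

end



lemma prob_disorder: "prob_space disorder"
  unfolding disorder_def by (intro prob_space_PiM prob_space_normal_density) simp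

lemma gauss_sq: "integrable disorder (\<lambda>J. (J is)\<^sup>2) \<and> integral\<^sup>L disorder (\<lambda>J. (J is)\<^sup>2) = 1"
proof -
  let ?G = "density lborel std_normal_density"
  have d: "distr disorder ?G (\<lambda>J. J is) = ?G"
    unfolding disorder_def by (rule distr_PiM_component) (auto intro: prob_space_normal_density)
  have m: "(\<lambda>J. J is) \<in> disorder \<rightarrow>\<^sub>M ?G"
    unfolding disorder_def by (rule measurable_component_singleton) simp
  have f: "(\<lambda>x::real. x\<^sup>2) \<in> borel_measurable ?G"
    by (simp add: measurable_cong_sets[OF sets_density refl])
  have i1: "integrable ?G (\<lambda>x::real. x\<^sup>2)"
    by (subst integrable_density) (auto simp: normal_density_nonneg intro: integrable_std_normal_moment[of 2])
  have v1: "integral\<^sup>L ?G (\<lambda>x::real. x\<^sup>2) = 1"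
    using integral_std_normal_moment_even[of 1]
    by (subst integral_density) (auto simp: normal_density_nonneg)
  have "integrable disorder (\<lambda>J. (J is)\<^sup>2)"
    using integrable_distr_eq[OF m f] i1 d by simp
  moreover have "integral\<^sup>L disorder (\<lambda>J. (J is)\<^sup>2) = 1"
    using integral_distr[OF m f] v1 d by simp
  ultimately show ?thesis by simp
qed

lemma ln_int_cmp:
  fixes f1 f2 :: "'a \<Rightarrow> real"
  assumes m1: "f1 \<in> borel_measurable M" and m2: "f2 \<in> borel_measurable M"
   and nn: "\<And>x. x \<in> space M \<Longrightarrow> 0 \<le> f2 x"
   and le1: "\<And>x. x \<in> space M \<Longrightarrow> f1 x \<le> exp K * f2 x"
   and le2: "\<And>x. x \<in> space M \<Longrightarrow> f2 x \<le> exp K * f1 x"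
   and K: "0 \<le> K"
  shows "\<bar>ln (integral\<^sup>L M f1) - ln (integral\<^sup>L M f2)\<bar> \<le> K"
proof -
  have nn1: "0 \<le> f1 x" if "x \<in> space M" for x
  proof -
    have "0 \<le> exp K * f1 x" using nn[OF that] le2[OF that] by linarith
    then show ?thesis by (simp add: zero_le_mult_iff)
  qed
  show ?thesis
  proof (cases "integrable M f2")
    case True
    have ae: "AE x in M. norm (f1 x) \<le> norm (exp K * f2 x)"
    proof (rule AE_I2)
      fix x assume x: "x \<in> space M"
      show "norm (f1 x) \<le> norm (exp K * f2 x)" using nn[OF x] nn1[OF x] le1[OF x] by simp
    qed
    have i1: "integrable M f1"
      by (rule Bochner_Integration.integrable_bound[OF integrable_mult_right[OF True] m1 ae])
    have a: "integral\<^sup>L M f1 \<le> exp K * integral\<^sup>L M f2"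
      using integral_mono[OF i1 integrable_mult_right[OF True], of "exp K"] le1 by simp
    have b: "integral\<^sup>L M f2 \<le> exp K * integral\<^sup>L M f1"
      using integral_mono[OF True integrable_mult_right[OF i1], of "exp K"] le2 by simp
    have c1: "0 \<le> integral\<^sup>L M f1" using nn1 by (simp add: integral_nonneg)
    have c2: "0 \<le> integral\<^sup>L M f2" using nn by (simp add: integral_nonneg)
    show ?thesis
    proof (cases "integral\<^sup>L M f2 = 0")
      case True
      then have "integral\<^sup>L M f1 = 0" using a c1 by simp
      then show ?thesis using True K by simp
    next
      case False
      then have p2: "0 < integral\<^sup>L M f2" using c2 by simp
      have p1: "0 < integral\<^sup>L M f1"
      proof -
        have "0 < exp K * integral\<^sup>L M f1" using b p2 by linarith
        then show ?thesis by (simp add: zero_less_mult_iff)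
      qed
      have "ln (integral\<^sup>L M f1) \<le> ln (exp K * integral\<^sup>L M f2)"
        using a p1 by simp
      also have "\<dots> = K + ln (integral\<^sup>L M f2)" using p2 by (simp add: ln_mult)
      finally have x1: "ln (integral\<^sup>L M f1) \<le> K + ln (integral\<^sup>L M f2)" .
      have "ln (integral\<^sup>L M f2) \<le> ln (exp K * integral\<^sup>L M f1)"
        using b p2 by simp
      also have "\<dots> = K + ln (integral\<^sup>L M f1)" using p1 by (simp add: ln_mult)
      finally show ?thesis using x1 by linarith
    qed
  next
    case False
    have "\<not> integrable M f1"
    proof
      assume i1: "integrable M f1"
      have ae: "AE x in M. norm (f2 x) \<le> norm (exp K * f1 x)"
      proof (rule AE_I2)
        fix x assume x: "x \<in> space M"
        show "norm (f2 x) \<le> norm (exp K * f1 x)" using nn[OF x] nn1[OF x] le2[OF x] by simp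
      qed
      have "integrable M f2"
        by (rule Bochner_Integration.integrable_bound[OF integrable_mult_right[OF i1] m2 ae])
      then show False using False by simp
    qed
    then show ?thesis using False K by (simp add: not_integrable_integral_eq)
  qed
qed

context part begin

lemma sum_part: "(\<Sum>j<N. f j) = (\<Sum>s\<in>UNIV. \<Sum>j\<in>I N s. f j)"
proof -
  have "(\<Sum>j<N. f j) = sum f (\<Union>s. I N s)" by (simp add: cover)
  also have "\<dots> = (\<Sum>s\<in>UNIV. sum f (I N s))"
    by (rule sum.UNION_disjoint) (auto dest: I_unique)
  finally show ?thesis .
qed

lemma card_part: "real N = (\<Sum>s\<in>UNIV. real (card (I N s)))"
  using sum_part[where N=N and f="\<lambda>_. (1::real)"] by simp

lemma cross_bound:
  assumes Q: "QB N n \<rho> \<Sigma>" and rho: "0 \<le> \<rho>" and S: "S \<subseteq> {..<n}"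
  shows "(\<Sum>j<N. (\<Sum>i\<in>S. \<Sigma> i j)\<^sup>2) \<le> real N * real n * (1 + real n * \<rho>)"
proof -
  have fS: "finite S" using S finite_subset by blast
  have inner: "(\<Sum>j<N. \<Sigma> i j * \<Sigma> k j) \<le> (if i = k then real N else 0) + real N * \<rho>"
    if i: "i \<in> S" and k: "k \<in> S" for i k
  proof (cases "i = k")
    case True
    have "(\<Sum>j<N. \<Sigma> i j * \<Sigma> k j) = (\<Sum>s\<in>UNIV. \<Sum>j\<in>I N s. (\<Sigma> i j)\<^sup>2)"
      by (simp add: sum_part True power2_eq_square)
    also have "\<dots> = real N" using Q i S by (auto simp: QB_def card_part[symmetric])
    finally show ?thesis using True rho by simp
  next
    case False
    have "(\<Sum>j<N. \<Sigma> i j * \<Sigma> k j) = (\<Sum>s\<in>UNIV. \<Sum>j\<in>I N s. \<Sigma> i j * \<Sigma> k j)"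
      by (simp add: sum_part)
    also have "\<dots> \<le> (\<Sum>s\<in>UNIV. real (card (I N s)) * \<rho>)"
    proof (rule sum_mono)
      fix s
      show "(\<Sum>j\<in>I N s. \<Sigma> i j * \<Sigma> k j) \<le> real (card (I N s)) * \<rho>"
      proof (cases "card (I N s) = 0")
        case True then have "I N s = {}" by simp
        then show ?thesis by simp
      next
        case c: False
        have "\<bar>(\<Sum>j\<in>I N s. \<Sigma> i j * \<Sigma> k j) / real (card (I N s))\<bar> \<le> \<rho>"
        proof -
          have ik: "i \<in> {..<n}" "k \<in> {..<n}" using i k S by auto
          show ?thesis using Q False ik unfolding QB_def by blast
        qed
        then have "(\<Sum>j\<in>I N s. \<Sigma> i j * \<Sigma> k j) / real (card (I N s)) \<le> \<rho>" by linarith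
        then show ?thesis using c by (simp add: divide_le_eq mult.commute)
      qed
    qed
    also have "\<dots> = real N * \<rho>" by (simp add: card_part[symmetric] sum_distrib_right[symmetric])
    finally show ?thesis using False by simp
  qed
  have "(\<Sum>j<N. (\<Sum>i\<in>S. \<Sigma> i j)\<^sup>2) = (\<Sum>j<N. \<Sum>i\<in>S. \<Sum>k\<in>S. \<Sigma> i j * \<Sigma> k j)"
    by (simp add: power2_eq_square sum_product)
  also have "\<dots> = (\<Sum>i\<in>S. \<Sum>j<N. \<Sum>k\<in>S. \<Sigma> i j * \<Sigma> k j)"
    by (rule sum.swap)
  also have "\<dots> = (\<Sum>i\<in>S. \<Sum>k\<in>S. \<Sum>j<N. \<Sigma> i j * \<Sigma> k j)"
    by (intro sum.cong refl sum.swap)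
  also have "\<dots> \<le> (\<Sum>i\<in>S. \<Sum>k\<in>S. (if i = k then real N else 0) + real N * \<rho>)"
    by (intro sum_mono inner)
  also have "\<dots> = real (card S) * real N + real (card S) * real (card S) * (real N * \<rho>)"
    using fS by (simp add: sum.distrib sum.delta algebra_simps)
  also have "\<dots> \<le> real n * real N + real n * real n * (real N * \<rho>)"
  proof -
    have c: "card S \<le> n" using card_mono[OF _ S] by simp
    then have "real (card S) * real (card S) \<le> real n * real n" by (simp add: mult_mono)
    moreover have "0 \<le> real N * \<rho>" using rho by simp
    ultimately show ?thesis using c by (intro add_mono mult_right_mono mult_mono) auto
  qed
  also have "\<dots> = real N * real n * (1 + real n * \<rho>)" by (simp add: algebra_simps)
  finally show ?thesis .
qed

lemma one_species: "a < N \<Longrightarrow> (\<Sum>s\<in>UNIV. (if a \<in> I N s then 1 else 0::nat)) = 1"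
proof -
  assume "a < N"
  then have t: "a \<in> I N (THE s. a \<in> I N s)" by (rule the_I)
  have "(\<Sum>s\<in>UNIV. (if a \<in> I N s then 1 else 0::nat)) = (\<Sum>s\<in>UNIV. (if s = (THE s. a \<in> I N s) then 1 else 0))"
    by (intro sum.cong refl) (use t I_unique in auto)
  also have "\<dots> = 1" by (simp add: sum.delta')
  finally show ?thesis .
qed

lemma tuple_norm: "set is \<subseteq> {..<N} \<Longrightarrow> norm_p (tuple_p I N is) = length is"
proof (induction "is")
  case Nil then show ?case by (simp add: norm_p_def tuple_p_def)
next
  case (Cons a "is")
  have "norm_p (tuple_p I N (a # is)) = (\<Sum>s\<in>UNIV. (if a \<in> I N s then 1 else 0) + tuple_p I N is s)"
    unfolding norm_p_def tuple_p_def by (intro sum.cong refl) simp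
  also have "\<dots> = 1 + norm_p (tuple_p I N is)"
    using one_species[of a N] Cons.prems by (simp add: sum.distrib norm_p_def)
  finally show ?case using Cons by simp
qed

definition Tk :: "(('s \<Rightarrow> nat) \<Rightarrow> real) \<Rightarrow> nat \<Rightarrow> (nat list \<Rightarrow> real) \<Rightarrow> (nat \<Rightarrow> real) \<Rightarrow> nat \<Rightarrow> real" where
  "Tk D N J \<sigma> k = (\<Sum>is\<in>tuples N (Suc k). coef I D N is * J is * (\<Prod>j\<leftarrow>is. \<sigma> j))"

definition field :: "(('s \<Rightarrow> nat) \<Rightarrow> real) \<Rightarrow> nat \<Rightarrow> (nat list \<Rightarrow> real) \<Rightarrow> (nat \<Rightarrow> real) \<Rightarrow> real" where
  "field D N J \<sigma> = (\<Sum>j<N. coef I D N [j] * J [j] * \<sigma> j)"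

lemma tuples1: "tuples N 1 = (\<lambda>j. [j]) ` {..<N}"
  by (auto simp: tuples_def length_Suc_conv)

lemma Tk0: "Tk D N J \<sigma> 0 = field D N J \<sigma>"
  unfolding Tk_def field_def
  by (simp add: tuples1[simplified] sum.reindex inj_on_def)

lemma ham_diff:
  assumes eq2: "\<And>p. 2 \<le> norm_p p \<Longrightarrow> D1 p = D2 p" and z1: "\<And>p. norm_p p \<le> 1 \<Longrightarrow> D2 p = 0"
  shows "\<exists>b. hamiltonian I D1 N J \<sigma> = hamiltonian I D2 N J \<sigma> + sqrt (real N) * (if b then field D1 N J \<sigma> else 0)"
proof -
  have coefeq: "coef I D1 N is = coef I D2 N is" if "is \<in> tuples N (Suc (Suc k))" for "is" k
  proof -
    have "norm_p (tuple_p I N is) = Suc (Suc k)" using that tuple_norm by (auto simp: tuples_def)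
    then show ?thesis unfolding coef_def Let_def using eq2 by simp
  qed
  have coef0: "coef I D2 N is = 0" if "is \<in> tuples N (Suc 0)" for "is"
  proof -
    have "norm_p (tuple_p I N is) = 1" using that tuple_norm by (auto simp: tuples_def)
    then show ?thesis unfolding coef_def Let_def using z1 by simp
  qed
  have T2_0: "Tk D2 N J \<sigma> 0 = 0" unfolding Tk_def by (simp add: coef0)
  have Teq: "Tk D1 N J \<sigma> = (\<lambda>k. Tk D2 N J \<sigma> k + (if k = 0 then field D1 N J \<sigma> else 0))"
  proof
    fix k show "Tk D1 N J \<sigma> k = Tk D2 N J \<sigma> k + (if k = 0 then field D1 N J \<sigma> else 0)"
    proof (cases k)
      case 0 then show ?thesis using T2_0 Tk0 by simp
    next
      case (Suc k') then show ?thesis unfolding Tk_def using coefeq by simp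
    qed
  qed
  have hD: "hamiltonian I D N J \<sigma> = sqrt (real N) * suminf (Tk D N J \<sigma>)" for D
    unfolding hamiltonian_def Tk_def by simp
  have sd: "(\<lambda>k. (if k = 0 then field D1 N J \<sigma> else 0)) sums field D1 N J \<sigma>"
    using sums_single[of 0 "\<lambda>_. field D1 N J \<sigma>"] by simp
  show ?thesis
  proof (cases "summable (Tk D2 N J \<sigma>)")
    case True
    then have "suminf (Tk D1 N J \<sigma>) = suminf (Tk D2 N J \<sigma>) + field D1 N J \<sigma>"
      unfolding Teq using sums_add[OF summable_sums[OF True] sd] sums_unique by metis
    then show ?thesis unfolding hD by (intro exI[of _ True]) (simp add: algebra_simps)
  next
    case False
    have nf: "\<not> summable (Tk D1 N J \<sigma>)"
    proof
      assume "summable (Tk D1 N J \<sigma>)"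
      then have "summable (\<lambda>k. Tk D1 N J \<sigma> k - (if k = 0 then field D1 N J \<sigma> else 0))"
        using sums_summable[OF sd] summable_diff by blast
      then show False using False unfolding Teq by simp
    qed
    have "(\<lambda>s. Tk D1 N J \<sigma> sums s) = (\<lambda>s. Tk D2 N J \<sigma> sums s)"
      using nf False sums_summable by blast
    then have "suminf (Tk D1 N J \<sigma>) = suminf (Tk D2 N J \<sigma>)"
      unfolding suminf_def by simp
    then show ?thesis unfolding hD by (intro exI[of _ False]) simp
  qed
qed


definition GG :: "(('s \<Rightarrow> nat) \<Rightarrow> real) \<Rightarrow> nat \<Rightarrow> (nat list \<Rightarrow> real) \<Rightarrow> real" where
  "GG D N J = (\<Sum>j<N. (coef I D N [j] * J [j])\<^sup>2)"

lemma A_diff: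
  assumes eq2: "\<And>p. 2 \<le> norm_p p \<Longrightarrow> D1 p = D2 p" and z1: "\<And>p. norm_p p \<le> 1 \<Longrightarrow> D2 p = 0"
    and Q: "QB N n \<rho> \<Sigma>" and rho: "0 \<le> \<rho>"
  shows "\<bar>(\<Sum>i<n. hamiltonian I D1 N J (\<Sigma> i)) - (\<Sum>i<n. hamiltonian I D2 N J (\<Sigma> i))\<bar>
     \<le> sqrt (real N) * sqrt (GG D1 N J * (real N * real n * (1 + real n * \<rho>)))"
proof -
  have "\<forall>i. \<exists>b. hamiltonian I D1 N J (\<Sigma> i) = hamiltonian I D2 N J (\<Sigma> i) + sqrt (real N) * (if b then field D1 N J (\<Sigma> i) else 0)"
    using ham_diff[of D1 D2, OF eq2 z1] by blast
  then obtain b where b: "\<And>i. hamiltonian I D1 N J (\<Sigma> i) = hamiltonian I D2 N J (\<Sigma> i) + sqrt (real N) * (if b i then field D1 N J (\<Sigma> i) else 0)"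
    by metis
  define S where "S = {i\<in>{..<n}. b i}"
  have S: "S \<subseteq> {..<n}" "finite S" by (auto simp: S_def)
  define a where "a j = coef I D1 N [j] * J [j]" for j
  have "(\<Sum>i<n. hamiltonian I D1 N J (\<Sigma> i)) - (\<Sum>i<n. hamiltonian I D2 N J (\<Sigma> i))
      = sqrt (real N) * (\<Sum>i<n. (if b i then field D1 N J (\<Sigma> i) else 0))"
    by (simp add: b sum.distrib sum_distrib_left)
  also have "(\<Sum>i<n. (if b i then field D1 N J (\<Sigma> i) else 0)) = (\<Sum>i\<in>S. field D1 N J (\<Sigma> i))"
    unfolding S_def by (rule sum.inter_filter[symmetric]) simp
  also have "\<dots> = (\<Sum>j<N. a j * (\<Sum>i\<in>S. \<Sigma> i j))"
    unfolding field_def a_def by (simp add: sum_distrib_left sum.swap[of _ S] mult.assoc)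
  finally have eq: "(\<Sum>i<n. hamiltonian I D1 N J (\<Sigma> i)) - (\<Sum>i<n. hamiltonian I D2 N J (\<Sigma> i))
      = sqrt (real N) * (\<Sum>j<N. a j * (\<Sum>i\<in>S. \<Sigma> i j))" .
  have cs: "(\<Sum>j<N. a j * (\<Sum>i\<in>S. \<Sigma> i j))\<^sup>2 \<le> (\<Sum>j<N. (a j)\<^sup>2) * (\<Sum>j<N. (\<Sum>i\<in>S. \<Sigma> i j)\<^sup>2)"
    by (rule Cauchy_Schwarz_ineq_sum)
  also have "\<dots> \<le> GG D1 N J * (real N * real n * (1 + real n * \<rho>))"
    unfolding GG_def a_def[symmetric]
    by (intro mult_left_mono cross_bound[OF Q rho S(1)]) (simp add: sum_nonneg)
  finally have "\<bar>\<Sum>j<N. a j * (\<Sum>i\<in>S. \<Sigma> i j)\<bar> \<le> sqrt (GG D1 N J * (real N * real n * (1 + real n * \<rho>)))"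
    using real_sqrt_le_mono real_sqrt_abs by metis
  then show ?thesis unfolding eq abs_mult by (simp add: mult_left_mono)
qed


lemma space_disorder: "space disorder = UNIV"
  unfolding disorder_def by (simp add: space_PiM)

lemma meas_integrand_J: "(\<lambda>\<Sigma>. indicator (Bset I N n \<rho>) \<Sigma> *\<^sub>R exp (\<Sum>i<n. hamiltonian I D N J (\<Sigma> i)))
   \<in> borel_measurable (PiM {..<n} (\<lambda>_. mu_N I N))"
  using measurable_Pair2[OF meas_integrand, of J] by (simp add: space_disorder)

lemma sqrt_le_1p: "0 \<le> x \<Longrightarrow> sqrt x \<le> 1 + (x::real)"
proof -
  assume x: "0 \<le> x"
  show ?thesis
  proof (cases "x \<le> 1")
    case True then have "sqrt x \<le> 1" by simp
    then show ?thesis using x by linarith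
  next
    case False then have "sqrt x \<le> x" using real_sqrt_le_mono[of x "x * x"]
      by (simp add: mult_le_cancel_left1)
    then show ?thesis by linarith
  qed
qed

lemma GG_nonneg: "0 \<le> GG D N J"
  unfolding GG_def by (simp add: sum_nonneg)

lemma F_diff:
  assumes eq2: "\<And>p. 2 \<le> norm_p p \<Longrightarrow> D1 p = D2 p" and z1: "\<And>p. norm_p p \<le> 1 \<Longrightarrow> D2 p = 0"
    and rho: "0 \<le> \<rho>"
  shows "\<bar>free_energy I D1 N n \<rho> J - free_energy I D2 N n \<rho> J\<bar> \<le> (1 + GG D1 N J) * sqrt (1 / real n + \<rho>)"
proof (cases "N = 0 \<or> n = 0")
  case True
  then show ?thesis unfolding free_energy_def using GG_nonneg[of D1 N J]
    by (auto intro!: mult_nonneg_nonneg simp: add_nonneg_nonneg rho)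
next
  case False
  then have N: "0 < N" and n: "0 < n" by auto
  let ?P = "PiM {..<n} (\<lambda>_. mu_N I N)"
  define K where "K = sqrt (real N) * sqrt (GG D1 N J * (real N * real n * (1 + real n * \<rho>)))"
  define f where "f D \<Sigma> = indicator (Bset I N n \<rho>) \<Sigma> *\<^sub>R exp (\<Sum>i<n. hamiltonian I D N J (\<Sigma> i))" for D \<Sigma>
  have K0: "0 \<le> K" unfolding K_def using GG_nonneg[of D1 N J] rho by simp
  have bnd: "\<bar>(\<Sum>i<n. hamiltonian I D1 N J (\<Sigma> i)) - (\<Sum>i<n. hamiltonian I D2 N J (\<Sigma> i))\<bar> \<le> K"
    if "\<Sigma> \<in> space ?P" "\<Sigma> \<in> Bset I N n \<rho>" for \<Sigma>
  proof -
    have "QB N n \<rho> \<Sigma>" using that Bset_space space_Pmu by blast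
    from A_diff[OF eq2 z1 this rho] show ?thesis unfolding K_def .
  qed
  have "\<bar>ln (integral\<^sup>L ?P (f D1)) - ln (integral\<^sup>L ?P (f D2))\<bar> \<le> K"
  proof (rule ln_int_cmp)
    show "f D1 \<in> borel_measurable ?P" "f D2 \<in> borel_measurable ?P"
      unfolding f_def[abs_def] by (rule meas_integrand_J)+
    fix \<Sigma> assume s: "\<Sigma> \<in> space ?P"
    show "0 \<le> f D2 \<Sigma>" unfolding f_def by simp
    show "f D1 \<Sigma> \<le> exp K * f D2 \<Sigma>"
    proof (cases "\<Sigma> \<in> Bset I N n \<rho>")
      case True
      from bnd[OF s True] have "(\<Sum>i<n. hamiltonian I D1 N J (\<Sigma> i)) \<le> K + (\<Sum>i<n. hamiltonian I D2 N J (\<Sigma> i))"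
        by linarith
      then have "exp (\<Sum>i<n. hamiltonian I D1 N J (\<Sigma> i)) \<le> exp K * exp (\<Sum>i<n. hamiltonian I D2 N J (\<Sigma> i))"
        by (simp add: exp_add[symmetric])
      then show ?thesis using True unfolding f_def by simp
    qed (simp add: f_def)
    show "f D2 \<Sigma> \<le> exp K * f D1 \<Sigma>"
    proof (cases "\<Sigma> \<in> Bset I N n \<rho>")
      case True
      from bnd[OF s True] have "(\<Sum>i<n. hamiltonian I D2 N J (\<Sigma> i)) \<le> K + (\<Sum>i<n. hamiltonian I D1 N J (\<Sigma> i))"
        by linarith
      then have "exp (\<Sum>i<n. hamiltonian I D2 N J (\<Sigma> i)) \<le> exp K * exp (\<Sum>i<n. hamiltonian I D1 N J (\<Sigma> i))"
        by (simp add: exp_add[symmetric])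
      then show ?thesis using True unfolding f_def by simp
    qed (simp add: f_def)
  qed (rule K0)
  then have "\<bar>free_energy I D1 N n \<rho> J - free_energy I D2 N n \<rho> J\<bar> \<le> K / (real N * real n)"
    unfolding free_energy_def set_lebesgue_integral_def f_def[symmetric] using N n
    by (simp add: right_diff_distrib[symmetric] abs_mult divide_simps mult.commute)
  also have "K / (real N * real n) = sqrt (GG D1 N J) * sqrt (1 / real n + \<rho>)"
  proof -
    have "K = sqrt (real N * real N * (real n * real n) * (GG D1 N J * (1 / real n + \<rho>)))"
      unfolding K_def using n by (simp add: real_sqrt_mult[symmetric] field_simps)
    also have "\<dots> = real N * real n * (sqrt (GG D1 N J) * sqrt (1 / real n + \<rho>))"
      by (simp add: real_sqrt_mult)
    finally show ?thesis using N n by simp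
  qed
  also have "\<dots> \<le> (1 + GG D1 N J) * sqrt (1 / real n + \<rho>)"
    by (intro mult_right_mono sqrt_le_1p GG_nonneg) (use rho in simp)
  finally show ?thesis .
qed


definition espec :: "'s \<Rightarrow> 's \<Rightarrow> nat" where
  "espec s = (\<lambda>t. if t = s then 1 else 0)"

lemma tuple_p_single: "j \<in> I N s \<Longrightarrow> tuple_p I N [j] = espec s"
  unfolding tuple_p_def espec_def by (rule ext) (auto dest: I_unique)

lemma coef_sq_le: assumes j: "j \<in> I N s"
  shows "(coef I D N [j])\<^sup>2 \<le> (D (espec s))\<^sup>2 / real (card (I N s))"
proof -
  have cpos: "0 < card (I N s)" using j card_gt_0_iff by fastforce
  define g where "g t = real (card (I N t)) powr (- real (espec s t))" for t
  have g0: "0 \<le> g t" for t unfolding g_def by simp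
  have pf: "(\<Prod>t\<in>UNIV. fact (espec s t) :: real) = 1"
    by (rule prod.neutral) (simp add: espec_def)
  have "(\<Prod>t\<in>UNIV. g t) = g s * (\<Prod>t\<in>UNIV - {s}. g t)"
    by (simp add: prod.remove)
  also have "\<dots> \<le> g s * 1"
    by (intro mult_left_mono prod_le_1 g0) (auto simp: g_def espec_def)
  also have "g s = 1 / real (card (I N s))"
    unfolding g_def espec_def using cpos by (simp add: powr_minus_divide)
  finally have pg: "(\<Prod>t\<in>UNIV. g t) \<le> 1 / real (card (I N s))" by simp
  have pg0: "0 \<le> (\<Prod>t\<in>UNIV. g t)" by (simp add: prod_nonneg g0)
  have "(coef I D N [j])\<^sup>2 = (D (espec s))\<^sup>2 * (\<Prod>t\<in>UNIV. g t)"
    unfolding coef_def Let_def tuple_p_single[OF j] g_def[symmetric]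
    using pg0 by (simp add: pf)
  also have "\<dots> \<le> (D (espec s))\<^sup>2 * (1 / real (card (I N s)))"
    by (intro mult_left_mono pg) simp
  finally show ?thesis by simp
qed

lemma sum_coef_le: "(\<Sum>j<N. (coef I D N [j])\<^sup>2) \<le> (\<Sum>s\<in>UNIV. (D (espec s))\<^sup>2)"
proof -
  have "(\<Sum>j<N. (coef I D N [j])\<^sup>2) = (\<Sum>s\<in>UNIV. \<Sum>j\<in>I N s. (coef I D N [j])\<^sup>2)"
    by (rule sum_part)
  also have "\<dots> \<le> (\<Sum>s\<in>UNIV. \<Sum>j\<in>I N s. (D (espec s))\<^sup>2 / real (card (I N s)))"
    by (intro sum_mono coef_sq_le)
  also have "\<dots> \<le> (\<Sum>s\<in>UNIV. (D (espec s))\<^sup>2)"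
  proof (rule sum_mono)
    fix s
    show "(\<Sum>j\<in>I N s. (D (espec s))\<^sup>2 / real (card (I N s))) \<le> (D (espec s))\<^sup>2"
      by (cases "card (I N s) = 0") auto
  qed
  finally show ?thesis .
qed

lemma GG_int: "integrable disorder (GG D N) \<and> integral\<^sup>L disorder (GG D N) \<le> (\<Sum>s\<in>UNIV. (D (espec s))\<^sup>2)"
proof -
  have e: "GG D N = (\<lambda>J. \<Sum>j<N. (coef I D N [j])\<^sup>2 * (J [j])\<^sup>2)"
    unfolding GG_def[abs_def] by (simp add: power_mult_distrib)
  have i: "integrable disorder (GG D N)"
    unfolding e by (intro Bochner_Integration.integrable_sum Bochner_Integration.integrable_mult_right gauss_sq[THEN conjunct1])
  have "integral\<^sup>L disorder (GG D N) = (\<Sum>j<N. (coef I D N [j])\<^sup>2)"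
    unfolding e by (subst Bochner_Integration.integral_sum) (auto intro!: Bochner_Integration.integrable_mult_right gauss_sq[THEN conjunct1] simp: gauss_sq[THEN conjunct2])
  with i sum_coef_le show ?thesis by simp
qed

end

lemma int_cmp:
  fixes f g Z :: "'a \<Rightarrow> real"
  assumes mf: "f \<in> borel_measurable M" and mg: "g \<in> borel_measurable M" and iZ: "integrable M Z"
    and b: "\<And>x. x \<in> space M \<Longrightarrow> \<bar>f x - g x\<bar> \<le> Z x"
  shows "\<bar>integral\<^sup>L M f - integral\<^sup>L M g\<bar> \<le> integral\<^sup>L M Z"
proof -
  have Z0: "0 \<le> Z x" if "x \<in> space M" for x using b[OF that] by linarith
  have IZ: "0 \<le> integral\<^sup>L M Z" using Z0 by (simp add: integral_nonneg)
  have ae: "AE x in M. norm (f x - g x) \<le> norm (Z x)"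
    by (rule AE_I2) (use b Z0 in auto)
  have idiff: "integrable M (\<lambda>x. f x - g x)"
    by (rule Bochner_Integration.integrable_bound[OF iZ _ ae]) (use mf mg in simp)
  show ?thesis
  proof (cases "integrable M g")
    case True
    then have iff': "integrable M f"
      using Bochner_Integration.integrable_add[OF idiff True] by simp
    have "\<bar>integral\<^sup>L M f - integral\<^sup>L M g\<bar> = \<bar>integral\<^sup>L M (\<lambda>x. f x - g x)\<bar>"
      using iff' True by simp
    also have "\<dots> \<le> integral\<^sup>L M (\<lambda>x. \<bar>f x - g x\<bar>)" by (rule integral_abs_bound)
    also have "\<dots> \<le> integral\<^sup>L M Z"
      by (rule integral_mono) (use idiff iZ b in auto)
    finally show ?thesis .
  next
    case False
    have "\<not> integrable M f"
    proof
      assume i: "integrable M f"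
      have "integrable M (\<lambda>x. f x - (f x - g x))" by (rule Bochner_Integration.integrable_diff[OF i idiff])
      then show False using False by simp
    qed
    then show ?thesis using False IZ by (simp add: not_integrable_integral_eq)
  qed
qed

context part begin

lemma E_diff:
  assumes eq2: "\<And>p. 2 \<le> norm_p p \<Longrightarrow> D1 p = D2 p" and z1: "\<And>p. norm_p p \<le> 1 \<Longrightarrow> D2 p = 0"
    and rho: "0 \<le> \<rho>"
  shows "\<bar>exp_free_energy I D1 N n \<rho> - exp_free_energy I D2 N n \<rho>\<bar>
     \<le> (1 + (\<Sum>s\<in>UNIV. (D1 (espec s))\<^sup>2)) * sqrt (1 / real n + \<rho>)"
proof -
  interpret prob_space disorder by (rule prob_disorder)
  let ?s = "sqrt (1 / real n + \<rho>)"
  have iG: "integrable disorder (GG D1 N)" using GG_int by blast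
  have iZ: "integrable disorder (\<lambda>J. (1 + GG D1 N J) * ?s)"
    using iG by (intro integrable_mult_left Bochner_Integration.integrable_add) auto
  have "\<bar>exp_free_energy I D1 N n \<rho> - exp_free_energy I D2 N n \<rho>\<bar>
     \<le> integral\<^sup>L disorder (\<lambda>J. (1 + GG D1 N J) * ?s)"
    unfolding exp_free_energy_def
    by (rule int_cmp[OF meas_free_energy meas_free_energy iZ F_diff[OF eq2 z1 rho]])
  also have "\<dots> = (1 + integral\<^sup>L disorder (GG D1 N)) * ?s"
    using iG by (simp add: prob_space)
  also have "\<dots> \<le> (1 + (\<Sum>s\<in>UNIV. (D1 (espec s))\<^sup>2)) * ?s"
    using GG_int[of D1 N] rho by (intro mult_right_mono) auto
  finally show ?thesis .
qed

end



theorem lemma10: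
  fixes I :: "nat \<Rightarrow> 's::finite \<Rightarrow> nat set"
    and lam :: "'s \<Rightarrow> real"
    and D :: "('s \<Rightarrow> nat) \<Rightarrow> real"
    and q :: "'s \<Rightarrow> real"
  assumes disj: "\<And>N s s'. s \<noteq> s' \<Longrightarrow> I N s \<inter> I N s' = {}"
    and cover: "\<And>N. (\<Union>s. I N s) = {..<N}"
    and ratio: "\<And>s. (\<lambda>N. real (card (I N s)) / real N) \<longlonglongrightarrow> lam s"
    and lam_pos: "\<And>s. 0 < lam s" and lam_lt1: "\<And>s. lam s < 1"
    and D_nonneg: "\<And>p. 0 \<le> D p"
    and xi_finite: "\<exists>\<epsilon>>0. (\<lambda>p. (D p)\<^sup>2 * (1 + \<epsilon>) ^ norm_p p) summable_on {p. 1 \<le> norm_p p}"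
    and q_range: "\<And>s. 0 \<le> q s \<and> q s < 1"
  shows "((\<lambda>(n, \<rho>). Limsup sequentially (\<lambda>N. ereal \<bar>exp_free_energy I (Delta_q2 D q) N n \<rho>
                 - exp_free_energy I (Delta_q1 D q) N n \<rho>\<bar>)) \<longlongrightarrow> 0)
         (sequentially \<times>\<^sub>F at_right 0)"
proof -
  interpret part I by standard (use disj cover in auto)
  define C where "C = 1 + (\<Sum>s\<in>UNIV. (Delta_q1 D q (espec s))\<^sup>2)"
  define h where "h x = C * sqrt (1 / real (fst x) + snd x)" for x :: "nat \<times> real"
  have eq2: "\<And>p. 2 \<le> norm_p p \<Longrightarrow> Delta_q1 D q p = Delta_q2 D q p"
    by (simp add: Delta_q1_def Delta_q2_def)
  have z1: "\<And>p. norm_p p \<le> 1 \<Longrightarrow> Delta_q2 D q p = 0"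
    by (simp add: Delta_q2_def)
  have bnd: "\<bar>exp_free_energy I (Delta_q2 D q) N n \<rho> - exp_free_energy I (Delta_q1 D q) N n \<rho>\<bar> \<le> h (n, \<rho>)"
    if "0 \<le> \<rho>" for N n \<rho>
    using E_diff[of "Delta_q1 D q" "Delta_q2 D q", OF eq2 z1 that, of N n]
    unfolding h_def C_def by (simp add: abs_minus_commute)
  define g where "g = (\<lambda>(n, \<rho>). Limsup sequentially (\<lambda>N. ereal \<bar>exp_free_energy I (Delta_q2 D q) N n \<rho>
                 - exp_free_energy I (Delta_q1 D q) N n \<rho>\<bar>))"
  have ev: "eventually (\<lambda>x. 0 < snd x) (sequentially \<times>\<^sub>F at_right (0::real))"
    unfolding eventually_prod_filter
    by (intro exI[of _ "\<lambda>_. True"] exI[of _ "\<lambda>y. 0 < y"]) (simp add: eventually_at_right_less)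
  have lo: "eventually (\<lambda>x. 0 \<le> g x) (sequentially \<times>\<^sub>F at_right (0::real))"
  proof (rule always_eventually, rule allI)
    fix x :: "nat \<times> real"
    obtain n \<rho> where x: "x = (n, \<rho>)" by fastforce
    have "0 \<le> Liminf sequentially (\<lambda>N. ereal \<bar>exp_free_energy I (Delta_q2 D q) N n \<rho>
                 - exp_free_energy I (Delta_q1 D q) N n \<rho>\<bar>)"
      by (intro Liminf_bounded) simp
    also have "\<dots> \<le> g x" unfolding g_def x by (simp add: Liminf_le_Limsup)
    finally show "0 \<le> g x" .
  qed
  have hi: "eventually (\<lambda>x. g x \<le> ereal (h x)) (sequentially \<times>\<^sub>F at_right (0::real))"
    using ev
  proof eventually_elim
    case (elim x)
    obtain n \<rho> where x: "x = (n, \<rho>)" by fastforce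
    show ?case unfolding g_def x
      by (simp, intro Limsup_bounded always_eventually allI) (use bnd elim x in auto)
  qed
  have ht: "(h \<longlongrightarrow> 0) (sequentially \<times>\<^sub>F at_right (0::real))"
  proof -
    have t1: "((\<lambda>x. 1 / real (fst x)) \<longlongrightarrow> 0) (sequentially \<times>\<^sub>F at_right (0::real))"
      by (rule filterlim_compose[OF lim_const_over_n filterlim_fst])
    have t2: "((\<lambda>x. snd x) \<longlongrightarrow> 0) (sequentially \<times>\<^sub>F at_right (0::real))"
      by (rule filterlim_compose[OF tendsto_ident_at filterlim_snd])
    have "((\<lambda>x. C * sqrt (1 / real (fst x) + snd x)) \<longlongrightarrow> C * sqrt (0 + 0)) (sequentially \<times>\<^sub>F at_right (0::real))"
      by (intro tendsto_mult tendsto_const tendsto_real_sqrt tendsto_add t1 t2)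
    then show ?thesis unfolding h_def by simp
  qed
  have "(g \<longlongrightarrow> 0) (sequentially \<times>\<^sub>F at_right (0::real))"
  proof (rule tendsto_sandwich[OF lo hi])
    show "((\<lambda>x. 0) \<longlongrightarrow> (0::ereal)) (sequentially \<times>\<^sub>F at_right 0)" by simp
    show "((\<lambda>x. ereal (h x)) \<longlongrightarrow> 0) (sequentially \<times>\<^sub>F at_right 0)"
      using ht by (simp add: zero_ereal_def tendsto_ereal)
  qed
  then show ?thesis unfolding g_def .
qed

end
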